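(* Let $a_1,\dots,a_n$ be positive integers, not both $n=1$ and $a_1=1$, and let $[a_1,\dots,a_n]=p/q$ with $p,q$ relatively prime positive integers. Then \[ [a_1,\dots,a_{n-1},a_n+1,a_n-1,a_{n-1},\dots,a_1]=\frac{p^2}{pq+(-1)^n}. \]
   Context: $[b_1,\dots,b_k]=b_1+\cfrac{1}{b_2+\cfrac{1}{\ddots+\cfrac{1}{b_k}}}$ denotes a continued fraction. An entry $0$ in the interior of a continued fraction is interpreted via $[\dots,a,0,b,\dots]=[\dots,a+b,\dots]$ (this occurs when $a_n=1$). *)

theory Defs
  imports Complex_Main
begin

text \<open>Since inverse (inverse y) = y holds in Isabelle fields (with inverse 0 = 0),
  an interior entry 0 automatically satisfies [..,a,0,b,..] = [..,a+b,..].\<close>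
fun cf :: "int list \<Rightarrow> rat" where
  "cf [] = 0"
| "cf [b] = of_int b"
| "cf (b # c # bs) = of_int b + 1 / cf (c # bs)"

end

theory Submission
  imports Defs
begin

fun cfx :: "int list \<Rightarrow> rat \<Rightarrow> rat" where
  "cfx [] x = x"
| "cfx (b # bs) x = of_int b + 1 / cfx bs x"

fun mt :: "int list \<Rightarrow> int \<times> int \<times> int \<times> int" where
  "mt [] = (1, 0, 0, 1)"
| "mt (b # bs) = (case mt bs of (P, P', Q, Q') \<Rightarrow> (b*P+Q, b*P'+Q', P, P'))"

lemma mt_nonneg: "\<forall>x\<in>set l. x \<ge> 0 \<Longrightarrow> mt l = (P,P',Q,Q') \<Longrightarrow> P \<ge> 0 \<and> P' \<ge> 0 \<and> Q \<ge> 0 \<and> Q' \<ge> 0"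
proof (induction l arbitrary: P P' Q Q')
  case Nil then show ?case by auto
next
  case (Cons b bs)
  obtain A A' B B' where m: "mt bs = (A,A',B,B')" by (cases "mt bs") auto
  with Cons show ?case by auto
qed

lemma mt_det: "mt l = (P,P',Q,Q') \<Longrightarrow> P*Q' - P'*Q = (-1)^length l"
proof (induction l arbitrary: P P' Q Q')
  case Nil then show ?case by auto
next
  case (Cons b bs)
  obtain A A' B B' where m: "mt bs = (A,A',B,B')" by (cases "mt bs") auto
  from Cons.IH[OF m] have "A*B' - A'*B = (-1)^length bs" .
  with Cons.prems m show ?case by (auto simp: algebra_simps)
qed

lemma cfx_mob: "\<forall>x\<in>set l. x \<ge> 0 \<Longrightarrow> mt l = (P,P',Q,Q') \<Longrightarrow> x > 0 \<Longrightarrow>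
   of_int P * x + of_int P' > 0 \<and> of_int Q * x + of_int Q' > 0 \<and>
   cfx l x = (of_int P * x + of_int P') / (of_int Q * x + of_int Q')"
proof (induction l arbitrary: P P' Q Q')
  case Nil then show ?case by auto
next
  case (Cons b bs)
  obtain A A' B B' where m: "mt bs = (A,A',B,B')" by (cases "mt bs") auto
  have b: "b \<ge> 0" using Cons.prems by auto
  from Cons.IH[OF _ m] Cons.prems have ih: "of_int A * x + of_int A' > 0" "of_int B * x + of_int B' > 0"
    "cfx bs x = (of_int A * x + of_int A') / (of_int B * x + of_int B')" by auto
  have e: "P = b*A+B" "P' = b*A'+B'" "Q = A" "Q' = A'" using Cons.prems m by auto
  have pos: "of_int P * x + of_int P' = of_int b * (of_int A * x + of_int A') + (of_int B * x + of_int B')"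
    unfolding e by (simp add: algebra_simps)
  have "of_int b * (of_int A * x + of_int A') \<ge> (0::rat)" using b ih by simp
  hence p1: "of_int P * x + of_int P' > 0" using pos ih by linarith
  have "cfx (b#bs) x = of_int b + (of_int B * x + of_int B') / (of_int A * x + of_int A')"
    using ih by simp
  also have "\<dots> = (of_int P * x + of_int P') / (of_int Q * x + of_int Q')"
    using ih unfolding pos e(3,4) by (simp add: field_simps)
  finally show ?case using p1 ih e by simp
qed

lemma mt_snoc: "mt (l @ [b]) = (case mt l of (P,P',Q,Q') \<Rightarrow> (P*b+P', P, Q*b+Q', Q))"
proof (induction l)
  case Nil then show ?case by simp
next
  case (Cons c bs)
  obtain A A' B B' where m: "mt bs = (A,A',B,B')" by (cases "mt bs") auto
  with Cons show ?case by (simp add: algebra_simps)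
qed

lemma cf_rev: "l \<noteq> [] \<Longrightarrow> \<forall>x\<in>set l. x > 0 \<Longrightarrow> mt l = (P,P',Q,Q') \<Longrightarrow>
   P > 0 \<and> P' > 0 \<and> cf (rev l) = of_int P / of_int P'"
proof (induction l arbitrary: P P' Q Q' rule: rev_induct)
  case Nil then show ?case by simp
next
  case (snoc b bs)
  obtain A A' B B' where m: "mt bs = (A,A',B,B')" by (cases "mt bs") auto
  have e: "P = A*b+A'" "P' = A" using snoc.prems m by (auto simp: mt_snoc)
  have b: "b > 0" using snoc.prems by auto
  have nn: "A \<ge> 0" "A' \<ge> 0" using mt_nonneg[OF _ m] snoc.prems by force+
  show ?case
  proof (cases "bs = []")
    case True
    then show ?thesis using m e b by simp
  next
    case False
    from snoc.IH[OF False _ m] snoc.prems have ih: "A > 0" "A' > 0" "cf (rev bs) = of_int A / of_int A'" by auto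
    obtain r rs where rr: "rev bs = r # rs" using False by (cases "rev bs") auto
    have "cf (rev (bs @ [b])) = of_int b + 1 / cf (rev bs)" using rr by simp
    also have "\<dots> = of_int b + of_int A' / of_int A" using ih by simp
    also have "\<dots> = of_int P / of_int P'" using ih unfolding e by (simp add: field_simps)
    finally show ?thesis using e ih b nn by (simp add: add_pos_nonneg)
  qed
qed

lemma cf_append: "L \<noteq> [] \<Longrightarrow> cf (c @ L) = cfx c (cf L)"
proof (induction c)
  case Nil then show ?case by simp
next
  case (Cons b bs)
  obtain y ys where "bs @ L = y # ys" using Cons.prems by (cases "bs @ L") auto
  then show ?case using Cons by simp
qed

lemma coprime_frac_eq:
  fixes p q p' q' :: int
  assumes "p > 0" "q > 0" "q' > 0" "coprime p q" "coprime p' q'"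
    and "(of_int p / of_int q :: rat) = of_int p' / of_int q'"
  shows "p = p' \<and> q = q'"
proof -
  have eq: "p * q' = p' * q"
    using assms by (simp add: field_simps flip: of_int_mult)
  have "p dvd p' * q" using eq by (metis dvd_triv_left)
  hence d1: "p dvd p'" using assms(4) by (simp add: coprime_dvd_mult_left_iff)
  have "p * q' > 0" using assms by simp
  hence "p' * q > 0" using eq by simp
  hence "p' > 0" using assms(2) by (simp add: zero_less_mult_iff)
  have "p' dvd p * q'" using eq by (metis dvd_triv_left)
  hence d2: "p' dvd p" using assms(5) by (simp add: coprime_dvd_mult_left_iff)
  have "p = p'" using d1 d2 assms(1) \<open>p' > 0\<close> by (simp add: zdvd_antisym_nonneg)
  then show ?thesis using eq assms(1) by simp
qed

lemma div_cancel_aux: "d \<noteq> 0 \<Longrightarrow> (a/d)/(b/d) = a/(b::rat)"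
  by (cases "b = 0") (simp_all add: field_simps)

theorem theorem3p18:
  fixes a :: "int list" and p q :: int
  assumes "a \<noteq> []"
    and "\<forall>x\<in>set a. x > 0"
    and "\<not> (length a = 1 \<and> hd a = 1)"
    and "p > 0" and "q > 0" and "coprime p q"
    and "cf a = of_int p / of_int q"
  shows "cf (butlast a @ [last a + 1, last a - 1] @ rev (butlast a))
           = of_int (p ^ 2) / of_int (p * q + (-1) ^ length a)"
proof -
  define c where "c = butlast a"
  define t where "t = last a"
  have a: "a = c @ [t]" using assms(1) unfolding c_def t_def by simp
  have t: "t > 0" using assms(2) a by auto
  have cpos: "\<forall>x\<in>set c. x > 0" using assms(2) a by auto
  have cfa: "cf a = cfx c (of_int t)" using a cf_append[of "[t]" c] by simp
  show ?thesis
  proof (cases "c = []")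
    case True
    hence at: "a = [t]" using a by simp
    hence t2: "t \<ge> 2" using assms(3) t by auto
    have "(of_int p / of_int q :: rat) = of_int t / of_int 1" using assms(7) at by simp
    from coprime_frac_eq[OF assms(4,5) _ assms(6) _ this] have pq: "p = t" "q = 1" by auto
    have tt: "(of_int t :: rat) - 1 \<noteq> 0" using t2 by simp
    have "cf (butlast a @ [last a + 1, last a - 1] @ rev (butlast a)) = of_int t + 1 + 1 / (of_int t - 1)"
      using at by simp
    also have "\<dots> = of_int (p ^ 2) / of_int (p * q + (-1) ^ length a)"
      using tt at pq by (simp add: field_simps power2_eq_square)
    finally show ?thesis .
  next
    case False
    obtain P P' Q Q' where m: "mt c = (P,P',Q,Q')" by (cases "mt c") auto
    have cnn: "\<forall>x\<in>set c. x \<ge> 0" using cpos by auto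
    have nn: "P \<ge> 0" "P' \<ge> 0" "Q \<ge> 0" "Q' \<ge> 0" using mt_nonneg[OF cnn m] by auto
    have det: "P*Q' - P'*Q = (-1)^length c" using mt_det[OF m] .
    from cf_rev[OF False cpos m] have rv: "P > 0" "P' > 0" "cf (rev c) = of_int P / of_int P'" by auto
    have tq: "(of_int t :: rat) > 0" using t by simp
    from cfx_mob[OF cnn m tq] have mb: "cfx c (of_int t) = (of_int P * of_int t + of_int P') / (of_int Q * of_int t + of_int Q')"
      "of_int Q * of_int t + of_int Q' > (0::rat)" by auto
    have "coprime (P*t+P') (Q*t+Q')"
    proof (rule coprimeI)
      fix d assume "d dvd P*t+P'" "d dvd Q*t+Q'"
      hence "d dvd (P*t+P')*Q - (Q*t+Q')*P" by simp
      also have "(P*t+P')*Q - (Q*t+Q')*P = - ((-1)^length c)" using det by (simp add: algebra_simps)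
      finally have "d dvd (-1)^length c" by simp
      moreover have "is_unit ((-1::int)^length c)" by simp
      ultimately show "is_unit d" by (rule dvd_unit_imp_unit)
    qed
    moreover have "Q*t+Q' > 0"
    proof -
      have "(of_int (Q*t+Q') :: rat) > 0" using mb(2) by simp
      thus ?thesis by (simp only: of_int_0_less_iff)
    qed
    moreover have "(of_int p / of_int q :: rat) = of_int (P*t+P') / of_int (Q*t+Q')"
    proof -
      have "(of_int p / of_int q :: rat) = cfx c (of_int t)" using assms(7) cfa by (simp only:)
      also have "\<dots> = of_int (P*t+P') / of_int (Q*t+Q')" unfolding mb(1) by (simp only: of_int_add of_int_mult)
      finally show ?thesis .
    qed
    ultimately have pq: "p = P*t+P'" "q = Q*t+Q'" using coprime_frac_eq[OF assms(4,5)] assms(6) by blast+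
    obtain r0 rs where rr: "rev c = r0 # rs" using False by (cases "rev c") auto
    define y where "y = cf ((t+1) # (t-1) # rev c)"
    have y: "y = of_int t + 1 + 1 / (of_int t - 1 + of_int P' / of_int P)"
      unfolding y_def using rr rv by simp
    have D: "(of_int t - 1) * of_int P + of_int P' > (0::rat)"
    proof -
      have "(t-1)*P \<ge> 0" using t rv by simp
      hence "(t-1)*P + P' > 0" using rv by linarith
      hence "(of_int ((t-1)*P + P') :: rat) > 0" by (simp only: of_int_0_less_iff)
      thus ?thesis by simp
    qed
    have y2: "y = ((of_int t + 1) * ((of_int t - 1) * of_int P + of_int P') + of_int P) / ((of_int t - 1) * of_int P + of_int P')"
      unfolding y using D rv by (simp add: field_simps)
    have t1: "of_int t + 1 > (0::rat)" using t by simp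
    have "(of_int t + 1) * ((of_int t - 1) * of_int P + of_int P') > (0::rat)" using t1 D by (rule mult_pos_pos)
    moreover have "(of_int P :: rat) > 0" using rv by simp
    ultimately have ypos: "y > 0" unfolding y2 using D by (metis divide_pos_pos add_pos_pos)
    from cfx_mob[OF cnn m ypos] have my: "cfx c y = (of_int P * y + of_int P') / (of_int Q * y + of_int Q')" by auto
    have lenA: "length a = Suc (length c)" using a by simp
    have s: "(of_int ((-1::int) ^ length a) :: rat) = of_int P' * of_int Q - of_int P * of_int Q'"
    proof -
      have s0: "(-1::int)^length a = P'*Q - P*Q'" using det lenA by (simp add: algebra_simps)
      show ?thesis unfolding s0 by simp
    qed
    have L: "cf (butlast a @ [last a + 1, last a - 1] @ rev (butlast a)) = cfx c y"
      unfolding y_def c_def[symmetric] t_def[symmetric] by (subst cf_append[symmetric]) auto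
    have den: "(of_int (p * q + (-1) ^ length a) :: rat) = ((of_int t - 1) * of_int P + of_int P') * (of_int q + of_int Q) + of_int P * of_int Q"
      unfolding of_int_add s using pq by (simp add: algebra_simps)
    have mq: "(of_int Q * y + of_int Q') = (((of_int t - 1) * of_int P + of_int P') * (of_int q + of_int Q) + of_int P * of_int Q) / ((of_int t - 1) * of_int P + of_int P')"
      unfolding y2 using D pq by (simp add: field_simps)
    have nq: "(of_int P * y + of_int P') = of_int (p^2) / ((of_int t - 1) * of_int P + of_int P')"
      unfolding y2 using D pq by (simp add: field_simps power2_eq_square)
    have "cfx c y = of_int (p ^ 2) / of_int (p * q + (-1) ^ length a)"
      unfolding my den nq mq using D by (intro div_cancel_aux) simp
    then show ?thesis using L by simp
  qed
qed

end
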